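(* Let $T>0$ and $\mathbf{u}\in C([0,T];X)$. Then for every $t\in[0,T]$ the map $(\mathbf{y},\mathbf{x})\mapsto\gamma(\mathbf{u})(\mathbf{y},\mathbf{x},t)$ on $\Omega\times\Omega$ is measurable, and for almost all $(\mathbf{y},\mathbf{x})$ the map $t\mapsto\gamma(\mathbf{u})(\mathbf{y},\mathbf{x},t)$ is continuous on $[0,T]$. Moreover, there is a constant $C$, independent of the vector fields, such that for all $\mathbf{u},\mathbf{w}\in C([0,T];X)$, almost all $(\mathbf{y},\mathbf{x})\in\Omega\times\Omega$ with $|\mathbf{y}-\mathbf{x}|<\epsilon$, and all $t\in[0,T]$, $$|\gamma(\mathbf{u})(\mathbf{y},\mathbf{x},t)-\gamma(\mathbf{w})(\mathbf{y},\mathbf{x},t)|\le \|\mathbf{u}-\mathbf{w}\|_{C([0,T];X)}\,\frac{C}{|\mathbf{y}-\mathbf{x}|}.$$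
   Context: Let $d\in\{2,3\}$, $\Omega\subset\mathbb{R}^d$ a bounded domain, $\epsilon>0$ a horizon, $L>0$ a length and $\overline{\mu}>0$. For a time-dependent displacement $\mathbf{u}(t,\cdot):\Omega\to\mathbb{R}^d$ and $\mathbf{y}\ne\mathbf{x}$, with $\mathbf{e}=(\mathbf{y}-\mathbf{x})/|\mathbf{y}-\mathbf{x}|$, the strain is $S(\mathbf{y},\mathbf{x},\mathbf{u}(t))=(\mathbf{u}(t,\mathbf{y})-\mathbf{u}(t,\mathbf{x}))\cdot\mathbf{e}/|\mathbf{y}-\mathbf{x}|$, the memory strain is $S^*(t,\mathbf{y},\mathbf{x},\mathbf{u})=\max_{0\le\tau\le t}S(\mathbf{y},\mathbf{x},\mathbf{u}(\tau))$ and $r^*=\sqrt{|\mathbf{y}-\mathbf{x}|/L}\,S^*(t,\mathbf{y},\mathbf{x},\mathbf{u})$. The failure envelope is the derivative $g'$ of a convex–concave potential $g$ with parameters $0<r^L\le r^C<r^F$: $g'(r)=\overline{\mu}r$ for $r\le r^L$, $g'$ becomes nonlinear beyond $r^L$ (strain hardening between $r^L$ and $r^C$) and decreases to $0$ at $r^F$, with $g'(r)=0$ for $r\ge r^F$ (e.g. the bilinear law $g'(r)=\overline{\mu}r$ for $r<r^C$, $g'(r)=\overline{\mu}r^C\frac{r^F-r}{r^F-r^C}$ for $r^C\le r\le r^F$, $0$ for $r>r^F$). The two-point phase field is $\gamma(\mathbf{u})(\mathbf{y},\mathbf{x},t)=\frac{g'(r^* )}{\overline{\mu}\,r^*}\in[0,1]$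 (equal to $1$ when $r^*\le r^L$). Let $\mathcal{U}=\{\mathbb{Q}\mathbf{x}+\mathbf{c}:\ \mathbb{Q}^T=-\mathbb{Q}\}$ be the rigid motions and $X$ the subspace of $L^\infty(\Omega;\mathbb{R}^d)$ of fields $L^2$-orthogonal to $\mathcal{U}$; $C([0,T];X)$ has norm $\sup_{0\le t\le T}\|\mathbf{u}(t)\|_{L^\infty}$. *)

theory Defs
  imports "HOL-Analysis.Analysis"
begin

definition strain :: "('a::euclidean_space \<Rightarrow> 'a) \<Rightarrow> 'a \<Rightarrow> 'a \<Rightarrow> real" where
  "strain v y x = ((v y - v x) \<bullet> ((y - x) /\<^sub>R norm (y - x))) / norm (y - x)"

definition mem_strain :: "(real \<Rightarrow> 'a::euclidean_space \<Rightarrow> 'a) \<Rightarrow> real \<Rightarrow> 'a \<Rightarrow> 'a \<Rightarrow> real" where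
  "mem_strain u t y x = (SUP \<tau>\<in>{0..t}. strain (u \<tau>) y x)"

definition rstar :: "real \<Rightarrow> (real \<Rightarrow> 'a::euclidean_space \<Rightarrow> 'a) \<Rightarrow> real \<Rightarrow> 'a \<Rightarrow> 'a \<Rightarrow> real" where
  "rstar L u t y x = sqrt (norm (y - x) / L) * mem_strain u t y x"

definition phase_field ::
  "(real \<Rightarrow> real) \<Rightarrow> real \<Rightarrow> real \<Rightarrow> real \<Rightarrow> (real \<Rightarrow> 'a::euclidean_space \<Rightarrow> 'a) \<Rightarrow> 'a \<Rightarrow> 'a \<Rightarrow> real \<Rightarrow> real"
  where
  "phase_field gp mu rL L u y x t =
     (let r = rstar L u t y x in if r \<le> rL then 1 else gp r / (mu * r))"

text \<open>Failure envelope g' = derivative of a convex-concave potential g with parameters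
  0 < r^L <= r^C < r^F.\<close>
definition failure_envelope :: "(real \<Rightarrow> real) \<Rightarrow> real \<Rightarrow> real \<Rightarrow> real \<Rightarrow> real \<Rightarrow> bool" where
  "failure_envelope gp mu rL rC rF \<longleftrightarrow>
     0 < mu \<and> 0 < rL \<and> rL \<le> rC \<and> rC < rF \<and>
     (\<forall>r. r \<le> rL \<longrightarrow> gp r = mu * r) \<and>
     (\<forall>r. rF \<le> r \<longrightarrow> gp r = 0) \<and>
     (\<forall>r s. r \<le> s \<and> s \<le> rC \<longrightarrow> gp r \<le> gp s) \<and>
     (\<forall>r s. rC \<le> r \<and> r \<le> s \<longrightarrow> gp s \<le> gp r) \<and>
     (\<forall>r. 0 \<le> r \<longrightarrow> 0 \<le> gp r \<and> gp r \<le> mu * r) \<and>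
     (\<exists>K. \<forall>r s. \<bar>gp r - gp s\<bar> \<le> K * \<bar>r - s\<bar>)"

text \<open>Rigid motions: x \<mapsto> Q x + c with Q linear and skew-symmetric.\<close>
definition skew :: "('a::euclidean_space \<Rightarrow> 'a) \<Rightarrow> bool" where
  "skew Q \<longleftrightarrow> linear Q \<and> (\<forall>a b. Q a \<bullet> b = - (a \<bullet> Q b))"

definition orth_rigid :: "'a::euclidean_space set \<Rightarrow> ('a \<Rightarrow> 'a) \<Rightarrow> bool" where
  "orth_rigid \<Omega> v \<longleftrightarrow> (\<forall>Q c. skew Q \<longrightarrow> (LINT x:\<Omega>|lebesgue. v x \<bullet> (Q x + c)) = 0)"

definition in_X :: "'a::euclidean_space set \<Rightarrow> ('a \<Rightarrow> 'a) \<Rightarrow> bool" where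
  "in_X \<Omega> v \<longleftrightarrow> v \<in> borel_measurable (lebesgue_on \<Omega>) \<and> (\<exists>B. \<forall>x\<in>\<Omega>. norm (v x) \<le> B)
                 \<and> orth_rigid \<Omega> v"

definition supnorm :: "'a::euclidean_space set \<Rightarrow> ('a \<Rightarrow> 'a) \<Rightarrow> real" where
  "supnorm \<Omega> v = (SUP x\<in>\<Omega>. norm (v x))"

definition in_CX :: "'a::euclidean_space set \<Rightarrow> real \<Rightarrow> (real \<Rightarrow> 'a \<Rightarrow> 'a) \<Rightarrow> bool" where
  "in_CX \<Omega> T u \<longleftrightarrow> (\<forall>t\<in>{0..T}. in_X \<Omega> (u t)) \<and>
     (\<forall>t\<in>{0..T}. \<forall>e>0. \<exists>\<delta>>0. \<forall>s\<in>{0..T}. \<bar>s - t\<bar> < \<delta> \<longrightarrow>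
        supnorm \<Omega> (\<lambda>x. u s x - u t x) < e)"

definition CX_norm :: "'a::euclidean_space set \<Rightarrow> real \<Rightarrow> (real \<Rightarrow> 'a \<Rightarrow> 'a) \<Rightarrow> real" where
  "CX_norm \<Omega> T u = (SUP t\<in>{0..T}. supnorm \<Omega> (u t))"

end

theory Submission
  imports Defs
begin


lemma fst_lebesgue:
  "fst \<in> (lebesgue :: ('a::euclidean_space \<times> 'b::euclidean_space) measure) \<rightarrow>\<^sub>M (lebesgue :: 'a measure)"
proof (rule completion.measurable_completion2)
  have "fst \<in> (lborel \<Otimes>\<^sub>M (lborel::'b measure)) \<rightarrow>\<^sub>M (lborel :: 'a measure)"
    by (rule measurable_fst)
  then have "fst \<in> (lborel :: ('a \<times> 'b) measure) \<rightarrow>\<^sub>M (lborel :: 'a measure)"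
    by (simp add: lborel_prod)
  then show "fst \<in> (lebesgue :: ('a \<times> 'b) measure) \<rightarrow>\<^sub>M (lborel :: 'a measure)"
    by (rule measurable_completion)
  show "null_sets (lborel :: 'a measure) \<subseteq> null_sets (distr (lebesgue :: ('a \<times> 'b) measure) lborel fst)"
  proof
    fix N :: "'a set" assume N: "N \<in> null_sets lborel"
    have "N \<times> (UNIV :: 'b set) \<in> null_sets (lborel \<Otimes>\<^sub>M (lborel::'b measure))"
      using N by (intro lborel.times_in_null_sets1) auto
    then have "N \<times> (UNIV :: 'b set) \<in> null_sets (lborel :: ('a \<times> 'b) measure)"
      by (simp add: lborel_prod)
    then have "N \<times> (UNIV :: 'b set) \<in> null_sets (lebesgue :: ('a \<times> 'b) measure)"
      by (rule null_sets_completionI)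
    moreover have "fst -` N = N \<times> (UNIV :: 'b set)" by auto
    ultimately show "N \<in> null_sets (distr (lebesgue :: ('a \<times> 'b) measure) lborel fst)"
      using N \<open>fst \<in> (lebesgue :: ('a \<times> 'b) measure) \<rightarrow>\<^sub>M (lborel :: 'a measure)\<close>
      by (auto simp: null_sets_def emeasure_distr)
  qed
qed

lemma snd_lebesgue:
  "snd \<in> (lebesgue :: ('a::euclidean_space \<times> 'b::euclidean_space) measure) \<rightarrow>\<^sub>M (lebesgue :: 'b measure)"
proof (rule completion.measurable_completion2)
  have "snd \<in> (lborel \<Otimes>\<^sub>M (lborel::'b measure)) \<rightarrow>\<^sub>M (lborel :: 'b measure)"
    by (rule measurable_snd)
  then have "snd \<in> (lborel :: ('a \<times> 'b) measure) \<rightarrow>\<^sub>M (lborel :: 'b measure)"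
    by (simp add: lborel_prod)
  then show "snd \<in> (lebesgue :: ('a \<times> 'b) measure) \<rightarrow>\<^sub>M (lborel :: 'b measure)"
    by (rule measurable_completion)
  show "null_sets (lborel :: 'b measure) \<subseteq> null_sets (distr (lebesgue :: ('a \<times> 'b) measure) lborel snd)"
  proof
    fix N :: "'b set" assume N: "N \<in> null_sets lborel"
    have "(UNIV :: 'a set) \<times> N \<in> null_sets (lborel \<Otimes>\<^sub>M (lborel::'b measure))"
      using N by (intro lborel.times_in_null_sets2) auto
    then have "(UNIV :: 'a set) \<times> N \<in> null_sets (lborel :: ('a \<times> 'b) measure)"
      by (simp add: lborel_prod)
    then have "(UNIV :: 'a set) \<times> N \<in> null_sets (lebesgue :: ('a \<times> 'b) measure)"
      by (rule null_sets_completionI)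
    moreover have "snd -` N = (UNIV :: 'a set) \<times> N" by auto
    ultimately show "N \<in> null_sets (distr (lebesgue :: ('a \<times> 'b) measure) lborel snd)"
      using N \<open>snd \<in> (lebesgue :: ('a \<times> 'b) measure) \<rightarrow>\<^sub>M (lborel :: 'b measure)\<close>
      by (auto simp: null_sets_def emeasure_distr)
  qed
qed

lemma fst_comp_meas:
  fixes v :: "'a::euclidean_space \<Rightarrow> 'c::euclidean_space"
  assumes "v \<in> borel_measurable (lebesgue_on A)"
  shows "(\<lambda>p. v (fst p)) \<in> borel_measurable (lebesgue_on (A \<times> (B::'b::euclidean_space set)))"
proof -
  have "fst \<in> lebesgue_on (A \<times> B) \<rightarrow>\<^sub>M lebesgue_on A"
    by (intro measurable_restrict_space2 measurable_restrict_space1 fst_lebesgue) auto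
  from measurable_compose[OF this assms] show ?thesis by (simp add: o_def)
qed

lemma snd_comp_meas:
  fixes v :: "'b::euclidean_space \<Rightarrow> 'c::euclidean_space"
  assumes "v \<in> borel_measurable (lebesgue_on B)"
  shows "(\<lambda>p. v (snd p)) \<in> borel_measurable (lebesgue_on ((A::'a::euclidean_space set) \<times> B))"
proof -
  have "snd \<in> lebesgue_on (A \<times> B) \<rightarrow>\<^sub>M lebesgue_on B"
    by (intro measurable_restrict_space2 measurable_restrict_space1 snd_lebesgue) auto
  from measurable_compose[OF this assms] show ?thesis by (simp add: o_def)
qed

lemma fst_meas: "(fst :: 'a::euclidean_space \<times> 'b::euclidean_space \<Rightarrow> 'a) \<in> borel_measurable (lebesgue_on S)"
  by (intro measurable_restrict_space1 measurable_completion) (simp add: borel_measurable_continuous_onI continuous_on_fst continuous_on_id)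
lemma snd_meas: "(snd :: 'a::euclidean_space \<times> 'b::euclidean_space \<Rightarrow> 'b) \<in> borel_measurable (lebesgue_on S)"
  by (intro measurable_restrict_space1 measurable_completion) (simp add: borel_measurable_continuous_onI continuous_on_snd continuous_on_id)

lemma strain_meas:
  fixes v :: "'a::euclidean_space \<Rightarrow> 'a"
  assumes "v \<in> borel_measurable (lebesgue_on A)"
  shows "(\<lambda>p. strain v (fst p) (snd p)) \<in> borel_measurable (lebesgue_on (A \<times> A))"
proof -
  note [measurable] = fst_comp_meas[OF assms, of A] snd_comp_meas[OF assms, of A] fst_meas snd_meas
  show ?thesis unfolding strain_def by measurable
qed



lemma supnorm_ge:
  assumes "\<exists>B. \<forall>x\<in>\<Omega>. norm (f x) \<le> B" "y \<in> \<Omega>"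
  shows "norm (f y) \<le> supnorm \<Omega> f"
  unfolding supnorm_def using assms by (intro cSUP_upper) (auto simp: bdd_above_def)

lemma supnorm_le:
  assumes "\<Omega> \<noteq> {}" "\<forall>x\<in>\<Omega>. norm (f x) \<le> B"
  shows "supnorm \<Omega> f \<le> B"
  unfolding supnorm_def using assms by (intro cSUP_least) auto

lemma inX_bdd_diff:
  assumes "in_X \<Omega> f" "in_X \<Omega> g"
  shows "\<exists>B. \<forall>x\<in>\<Omega>. norm (f x - g x) \<le> B"
proof -
  obtain B1 B2 where "\<forall>x\<in>\<Omega>. norm (f x) \<le> B1" "\<forall>x\<in>\<Omega>. norm (g x) \<le> B2"
    using assms unfolding in_X_def by blast
  then show ?thesis
    by (intro exI[of _ "B1 + B2"]) (smt (verit) norm_triangle_ineq4)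
qed

lemma cont_u:
  assumes "in_CX \<Omega> T u" "y \<in> \<Omega>"
  shows "continuous_on {0..T} (\<lambda>s. u s y)"
  unfolding continuous_on_iff
proof (intro ballI allI impI)
  fix t e :: real assume t: "t \<in> {0..T}" and e: "0 < e"
  obtain d where d: "d > 0" "\<forall>s\<in>{0..T}. \<bar>s - t\<bar> < d \<longrightarrow> supnorm \<Omega> (\<lambda>x. u s x - u t x) < e"
    using assms(1) t e unfolding in_CX_def by blast
  show "\<exists>d>0. \<forall>s\<in>{0..T}. dist s t < d \<longrightarrow> dist (u s y) (u t y) < e"
  proof (intro exI[of _ d] conjI ballI impI)
    fix s assume s: "s \<in> {0..T}" "dist s t < d"
    have "norm (u s y - u t y) \<le> supnorm \<Omega> (\<lambda>x. u s x - u t x)"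
      using assms(1) s t assms(2) unfolding in_CX_def
      by (intro supnorm_ge inX_bdd_diff) auto
    moreover have "supnorm \<Omega> (\<lambda>x. u s x - u t x) < e" using d(2) s by (simp add: dist_real_def)
    ultimately show "dist (u s y) (u t y) < e" by (simp add: dist_norm)
  qed (rule d)
qed

lemma cont_strain:
  assumes "in_CX \<Omega> T u" "y \<in> \<Omega>" "x \<in> \<Omega>"
  shows "continuous_on {0..T} (\<lambda>s. strain (u s) y x)"
proof -
  have "continuous_on {0..T} (\<lambda>s. ((u s y - u s x) \<bullet> ((y - x) /\<^sub>R norm (y - x))) * (1 / norm (y - x)))"
    using cont_u[OF assms(1,2)] cont_u[OF assms(1,3)] by (intro continuous_intros)
  then show ?thesis by (simp add: strain_def)
qed

lemma bdd_cont:
  fixes f :: "real \<Rightarrow> real"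
  assumes "continuous_on {a..b} f"
  shows "bdd_above (f ` {a..b})"
  using assms by (intro bounded_imp_bdd_above compact_imp_bounded compact_continuous_image) auto

lemma runmax_step:
  fixes f :: "real \<Rightarrow> real"
  assumes c: "continuous_on {0..T} f" and st: "0 \<le> s" "s \<le> t" "t \<le> T"
    and d: "\<forall>x\<in>{0..T}. \<forall>x'\<in>{0..T}. dist x' x < d \<longrightarrow> dist (f x') (f x) < e" and td: "t - s < d"
  shows "(SUP \<tau>\<in>{0..s}. f \<tau>) \<le> (SUP \<tau>\<in>{0..t}. f \<tau>) \<and> (SUP \<tau>\<in>{0..t}. f \<tau>) \<le> (SUP \<tau>\<in>{0..s}. f \<tau>) + e"
proof -
  have b: "bdd_above (f ` {0..r})" if "r \<le> T" for r
    by (rule bdd_above_mono[OF bdd_cont[OF c]]) (use that in \<open>intro image_mono, auto\<close>)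
  show ?thesis
  proof
    show "(SUP \<tau>\<in>{0..s}. f \<tau>) \<le> (SUP \<tau>\<in>{0..t}. f \<tau>)"
      using st b[of t] by (intro cSUP_subset_mono) auto
    show "(SUP \<tau>\<in>{0..t}. f \<tau>) \<le> (SUP \<tau>\<in>{0..s}. f \<tau>) + e"
    proof (rule cSUP_least)
      fix \<tau> assume \<tau>: "\<tau> \<in> {0..t}"
      have fs: "f s \<le> (SUP \<tau>\<in>{0..s}. f \<tau>)" using b[of s] st by (intro cSUP_upper) auto
      show "f \<tau> \<le> (SUP \<tau>\<in>{0..s}. f \<tau>) + e"
      proof (cases "\<tau> \<le> s")
        case True
        then have "f \<tau> \<le> (SUP \<tau>\<in>{0..s}. f \<tau>)" using b[of s] st \<tau> by (intro cSUP_upper) auto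
        moreover have "e > 0" using d[rule_format, of s s] st td by simp
        ultimately show ?thesis by simp
      next
        case False
        then have "dist (f \<tau>) (f s) < e" using d[rule_format, of s \<tau>] st \<tau> td by (simp add: dist_real_def)
        then show ?thesis using fs by (simp add: dist_real_def)
      qed
    qed (use st in auto)
  qed
qed

lemma runmax_cont:
  fixes f :: "real \<Rightarrow> real"
  assumes c: "continuous_on {0..T} f"
  shows "continuous_on {0..T} (\<lambda>t. SUP \<tau>\<in>{0..t}. f \<tau>)"
  unfolding continuous_on_iff
proof (intro ballI allI impI)
  fix t e :: real assume t: "t \<in> {0..T}" and e: "0 < e"
  have "uniformly_continuous_on {0..T} f" using c by (intro compact_uniformly_continuous) auto
  then obtain d where d: "d > 0" "\<forall>x\<in>{0..T}. \<forall>x'\<in>{0..T}. dist x' x < d \<longrightarrow> dist (f x') (f x) < e/2"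
    unfolding uniformly_continuous_on_def using e by (meson half_gt_zero)
  show "\<exists>d>0. \<forall>s\<in>{0..T}. dist s t < d \<longrightarrow> dist (SUP \<tau>\<in>{0..s}. f \<tau>) (SUP \<tau>\<in>{0..t}. f \<tau>) < e"
  proof (intro exI[of _ d] conjI ballI impI)
    fix s assume s: "s \<in> {0..T}" "dist s t < d"
    show "dist (SUP \<tau>\<in>{0..s}. f \<tau>) (SUP \<tau>\<in>{0..t}. f \<tau>) < e"
    proof (cases "s \<le> t")
      case True
      then show ?thesis using runmax_step[OF c _ True _ d(2), of ] s t e
        by (auto simp: dist_real_def)
    next
      case False
      then show ?thesis using runmax_step[OF c _ _ _ d(2), of t s] s t e
        by (auto simp: dist_real_def)
    qed
  qed (rule d)
qed

lemma sup_diff: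
  fixes f g :: "real \<Rightarrow> real"
  assumes "S \<noteq> {}" "bdd_above (f ` S)" "bdd_above (g ` S)" "\<forall>\<tau>\<in>S. \<bar>f \<tau> - g \<tau>\<bar> \<le> B"
  shows "\<bar>(SUP \<tau>\<in>S. f \<tau>) - (SUP \<tau>\<in>S. g \<tau>)\<bar> \<le> B"
proof -
  have "(SUP \<tau>\<in>S. f \<tau>) \<le> (SUP \<tau>\<in>S. g \<tau>) + B"
  proof (rule cSUP_least[OF assms(1)])
    fix \<tau> assume "\<tau> \<in> S"
    then have "g \<tau> \<le> (SUP \<tau>\<in>S. g \<tau>)" using assms by (intro cSUP_upper) auto
    then show "f \<tau> \<le> (SUP \<tau>\<in>S. g \<tau>) + B" using assms(4) \<open>\<tau> \<in> S\<close> by force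
  qed
  moreover have "(SUP \<tau>\<in>S. g \<tau>) \<le> (SUP \<tau>\<in>S. f \<tau>) + B"
  proof (rule cSUP_least[OF assms(1)])
    fix \<tau> assume "\<tau> \<in> S"
    then have "f \<tau> \<le> (SUP \<tau>\<in>S. f \<tau>)" using assms by (intro cSUP_upper) auto
    then show "g \<tau> \<le> (SUP \<tau>\<in>S. f \<tau>) + B" using assms(4) \<open>\<tau> \<in> S\<close> by force
  qed
  ultimately show ?thesis by linarith
qed

lemma sup_dense:
  fixes f :: "real \<Rightarrow> real"
  assumes c: "continuous_on {0..t} f" and t: "0 \<le> t"
  shows "(SUP \<tau>\<in>{0..t}. f \<tau>) = (SUP \<tau>\<in>{0..t} \<inter> \<rat>. f \<tau>)"
proof (rule antisym)
  have b: "bdd_above (f ` {0..t})" using bdd_cont[OF c] .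
  have ne: "{0..t} \<inter> \<rat> \<noteq> {}" using t by auto
  show "(SUP \<tau>\<in>{0..t} \<inter> \<rat>. f \<tau>) \<le> (SUP \<tau>\<in>{0..t}. f \<tau>)"
    using b ne by (intro cSUP_subset_mono) auto
  show "(SUP \<tau>\<in>{0..t}. f \<tau>) \<le> (SUP \<tau>\<in>{0..t} \<inter> \<rat>. f \<tau>)"
  proof (rule cSUP_least)
    fix \<tau> assume \<tau>: "\<tau> \<in> {0..t}"
    have bD: "bdd_above (f ` ({0..t} \<inter> \<rat>))" using b by (rule bdd_above_mono) auto
    show "f \<tau> \<le> (SUP \<tau>\<in>{0..t} \<inter> \<rat>. f \<tau>)"
    proof (rule field_le_epsilon)
      fix e :: real assume e: "0 < e"
      obtain d where d: "d > 0" "\<forall>x'\<in>{0..t}. dist x' \<tau> < d \<longrightarrow> dist (f x') (f \<tau>) < e"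
        using c \<tau> e unfolding continuous_on_iff by blast
      obtain q where q: "q \<in> {0..t} \<inter> \<rat>" "dist q \<tau> < d"
      proof (cases "\<tau> = 0")
        case True then show ?thesis using that[of 0] d t by auto
      next
        case False
        then obtain q where "q \<in> \<rat>" "max 0 (\<tau> - d) < q" "q < \<tau>"
          using Rats_dense_in_real[of "max 0 (\<tau> - d)" \<tau>] \<tau> d by auto
        then show ?thesis using that[of q] \<tau> by (auto simp: dist_real_def)
      qed
      have "f q \<le> (SUP \<tau>\<in>{0..t} \<inter> \<rat>. f \<tau>)" using bD q by (intro cSUP_upper) auto
      moreover have "dist (f q) (f \<tau>) < e" using d q by auto
      ultimately show "f \<tau> \<le> (SUP \<tau>\<in>{0..t} \<inter> \<rat>. f \<tau>) + e" by (auto simp: dist_real_def)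
    qed
  qed (use t in auto)
qed



definition hfun :: "(real \<Rightarrow> real) \<Rightarrow> real \<Rightarrow> real \<Rightarrow> real \<Rightarrow> real" where
  "hfun gp mu rL r = (if r \<le> rL then 1 else gp r / (mu * r))"

lemma phase_hfun: "phase_field gp mu rL L u y x t = hfun gp mu rL (rstar L u t y x)"
  by (simp add: phase_field_def hfun_def Let_def)

lemma lip_core:
  fixes gp :: "real \<Rightarrow> real"
  assumes mu: "0 < mu" and rL: "0 < rL" and r: "rL \<le> r" and s: "rL \<le> s"
    and K: "0 \<le> K" "\<bar>gp r - gp s\<bar> \<le> K * \<bar>r - s\<bar>" and g: "0 \<le> gp s" "gp s \<le> mu * s"
  shows "\<bar>gp r / (mu * r) - gp s / (mu * s)\<bar> \<le> (K + mu) / (mu * rL) * \<bar>r - s\<bar>"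
proof -
  have r0: "0 < r" and s0: "0 < s" using r s rL by auto
  have eq: "gp r / (mu * r) - gp s / (mu * s) = (gp r - gp s) / (mu * r) + (gp s / (mu * s)) * ((s - r) / r)"
    using r0 s0 mu by (simp add: field_simps)
  have q1: "0 \<le> gp s / (mu * s)" "gp s / (mu * s) \<le> 1" using g mu s0 by (auto simp: divide_simps)
  have a1: "\<bar>(gp r - gp s) / (mu * r)\<bar> \<le> K * \<bar>r - s\<bar> / (mu * rL)"
  proof -
    have "\<bar>(gp r - gp s) / (mu * r)\<bar> = \<bar>gp r - gp s\<bar> / (mu * r)" using mu r0 by (simp add: abs_divide)
    also have "\<dots> \<le> K * \<bar>r - s\<bar> / (mu * r)" using K mu r0 by (intro divide_right_mono) auto
    also have "\<dots> \<le> K * \<bar>r - s\<bar> / (mu * rL)" using K mu rL r by (intro divide_left_mono mult_left_mono) auto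
    finally show ?thesis .
  qed
  have a2: "\<bar>(gp s / (mu * s)) * ((s - r) / r)\<bar> \<le> mu * \<bar>r - s\<bar> / (mu * rL)"
  proof -
    have "\<bar>(gp s / (mu * s)) * ((s - r) / r)\<bar> = (gp s / (mu * s)) * (\<bar>r - s\<bar> / r)"
      using q1 r0 s0 mu g(1) by (simp add: abs_mult abs_divide abs_minus_commute)
    also have "\<dots> \<le> 1 * (\<bar>r - s\<bar> / r)" using q1 r0 by (intro mult_right_mono) auto
    also have "\<dots> \<le> \<bar>r - s\<bar> / rL" using rL r by (simp add: divide_left_mono)
    also have "\<dots> = mu * \<bar>r - s\<bar> / (mu * rL)" using mu by simp
    finally show ?thesis .
  qed
  have "\<bar>gp r / (mu * r) - gp s / (mu * s)\<bar> \<le> K * \<bar>r - s\<bar> / (mu * rL) + mu * \<bar>r - s\<bar> / (mu * rL)"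
    unfolding eq using a1 a2 abs_triangle_ineq[of "(gp r - gp s) / (mu * r)" "(gp s / (mu * s)) * ((s - r) / r)"] by linarith
  also have "\<dots> = (K + mu) / (mu * rL) * \<bar>r - s\<bar>" using mu rL by (simp add: field_simps)
  finally show ?thesis .
qed

lemma hfun_lip:
  assumes env: "failure_envelope gp mu rL rC rF"
  shows "\<exists>Lh\<ge>0. \<forall>r s. \<bar>hfun gp mu rL r - hfun gp mu rL s\<bar> \<le> Lh * \<bar>r - s\<bar>"
proof -
  obtain K0 where K0: "\<forall>r s. \<bar>gp r - gp s\<bar> \<le> K0 * \<bar>r - s\<bar>" using env unfolding failure_envelope_def by blast
  define K where "K = \<bar>K0\<bar>"
  have K: "0 \<le> K" "\<And>r s. \<bar>gp r - gp s\<bar> \<le> K * \<bar>r - s\<bar>"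
  proof -
    show "0 \<le> K" unfolding K_def by simp
    fix r s
    have "K0 * \<bar>r - s\<bar> \<le> \<bar>K0\<bar> * \<bar>r - s\<bar>" by (intro mult_right_mono) auto
    then show "\<bar>gp r - gp s\<bar> \<le> K * \<bar>r - s\<bar>" unfolding K_def using K0 by (meson order_trans)
  qed
  have mu: "0 < mu" and rL: "0 < rL" and lin: "\<And>r. r \<le> rL \<Longrightarrow> gp r = mu * r"
    and g: "\<And>r. 0 \<le> r \<Longrightarrow> 0 \<le> gp r \<and> gp r \<le> mu * r"
    using env unfolding failure_envelope_def by auto
  define Lh where "Lh = (K + mu) / (mu * rL)"
  have Lh0: "Lh \<ge> 0" unfolding Lh_def using K mu rL by auto
  have core: "\<bar>gp r / (mu * r) - gp s / (mu * s)\<bar> \<le> Lh * \<bar>r - s\<bar>" if "rL \<le> r" "rL \<le> s" for r s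
    unfolding Lh_def using that rL mu K g[of s] by (intro lip_core) auto
  have rLv: "gp rL / (mu * rL) = 1" using lin[of rL] mu rL by simp
  have half: "\<bar>1 - gp s / (mu * s)\<bar> \<le> Lh * \<bar>r - s\<bar>" if "r \<le> rL" "rL < s" for r s
  proof -
    have "\<bar>1 - gp s / (mu * s)\<bar> \<le> Lh * \<bar>rL - s\<bar>" using core[of rL s] that rLv by simp
    also have "\<dots> \<le> Lh * \<bar>r - s\<bar>" using that Lh0 by (intro mult_left_mono) auto
    finally show ?thesis .
  qed
  have "\<bar>hfun gp mu rL r - hfun gp mu rL s\<bar> \<le> Lh * \<bar>r - s\<bar>" for r s
  proof (cases "r \<le> rL")
    case True
    show ?thesis
    proof (cases "s \<le> rL")
      case True then show ?thesis using \<open>r \<le> rL\<close> Lh0 by (simp add: hfun_def)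
    next
      case False then show ?thesis using half[of r s] True by (simp add: hfun_def)
    qed
  next
    case False
    show ?thesis
    proof (cases "s \<le> rL")
      case True then show ?thesis using half[of s r] False by (simp add: hfun_def abs_minus_commute)
    next
      case F2: False then show ?thesis using core[of r s] False by (simp add: hfun_def)
    qed
  qed
  then show ?thesis using Lh0 by blast
qed

lemma hfun_cont:
  assumes env: "failure_envelope gp mu rL rC rF"
  shows "continuous_on UNIV (hfun gp mu rL)"
proof -
  obtain Lh where "Lh \<ge> 0" "\<forall>r s. \<bar>hfun gp mu rL r - hfun gp mu rL s\<bar> \<le> Lh * \<bar>r - s\<bar>"
    using hfun_lip[OF env] by blast
  then have "lipschitz_on Lh UNIV (hfun gp mu rL)"
    by (intro lipschitz_onI) (auto simp: dist_real_def)
  then show ?thesis by (rule lipschitz_on_continuous_on)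
qed

lemma supnorm_diff_tri:
  assumes u: "in_CX \<Omega> T u" and w: "in_CX \<Omega> T w" and ne: "\<Omega> \<noteq> {}"
    and s: "s \<in> {0..T}" and t: "t \<in> {0..T}"
  shows "supnorm \<Omega> (\<lambda>x. u s x - w s x) \<le> supnorm \<Omega> (\<lambda>x. u t x - w t x)
           + supnorm \<Omega> (\<lambda>x. u s x - u t x) + supnorm \<Omega> (\<lambda>x. w s x - w t x)"
proof (rule supnorm_le[OF ne], intro ballI)
  fix x assume x: "x \<in> \<Omega>"
  have X: "in_X \<Omega> (u s)" "in_X \<Omega> (u t)" "in_X \<Omega> (w s)" "in_X \<Omega> (w t)"
    using u w s t unfolding in_CX_def by auto
  have "norm (u s x - w s x) \<le> norm (u t x - w t x) + norm (u s x - u t x) + norm (w s x - w t x)"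
  proof -
    have eq: "u s x - w s x = ((u t x - w t x) + (u s x - u t x)) - (w s x - w t x)" by (simp add: algebra_simps)
    show ?thesis unfolding eq
      using norm_triangle_ineq4[of "(u t x - w t x) + (u s x - u t x)" "w s x - w t x"]
        norm_triangle_ineq[of "u t x - w t x" "u s x - u t x"] by linarith
  qed
  moreover have "norm (u t x - w t x) \<le> supnorm \<Omega> (\<lambda>x. u t x - w t x)"
    using X x by (intro supnorm_ge[where f="\<lambda>x. u t x - w t x"] inX_bdd_diff) auto
  moreover have "norm (u s x - u t x) \<le> supnorm \<Omega> (\<lambda>x. u s x - u t x)"
    using X x by (intro supnorm_ge[where f="\<lambda>x. u s x - u t x"] inX_bdd_diff) auto
  moreover have "norm (w s x - w t x) \<le> supnorm \<Omega> (\<lambda>x. w s x - w t x)"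
    using X x by (intro supnorm_ge[where f="\<lambda>x. w s x - w t x"] inX_bdd_diff) auto
  ultimately show "norm (u s x - w s x) \<le> supnorm \<Omega> (\<lambda>x. u t x - w t x)
           + supnorm \<Omega> (\<lambda>x. u s x - u t x) + supnorm \<Omega> (\<lambda>x. w s x - w t x)" by linarith
qed

lemma supnorm_swap: "supnorm \<Omega> (\<lambda>x. f x - g x) = supnorm \<Omega> (\<lambda>x. g x - f x)"
  unfolding supnorm_def by (simp add: norm_minus_commute)

lemma CX_bdd:
  assumes u: "in_CX \<Omega> T u" and w: "in_CX \<Omega> T w" and ne: "\<Omega> \<noteq> {}"
  shows "bdd_above ((\<lambda>t. supnorm \<Omega> (\<lambda>x. u t x - w t x)) ` {0..T})"
proof -
  have "continuous_on {0..T} (\<lambda>t. supnorm \<Omega> (\<lambda>x. u t x - w t x))"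
    unfolding continuous_on_iff
  proof (intro ballI allI impI)
    fix t e :: real assume t: "t \<in> {0..T}" and e: "0 < e"
    obtain d1 where d1: "d1 > 0" "\<forall>s\<in>{0..T}. \<bar>s - t\<bar> < d1 \<longrightarrow> supnorm \<Omega> (\<lambda>x. u s x - u t x) < e/2"
      using u t e unfolding in_CX_def by (meson half_gt_zero)
    obtain d2 where d2: "d2 > 0" "\<forall>s\<in>{0..T}. \<bar>s - t\<bar> < d2 \<longrightarrow> supnorm \<Omega> (\<lambda>x. w s x - w t x) < e/2"
      using w t e unfolding in_CX_def by (meson half_gt_zero)
    show "\<exists>d>0. \<forall>s\<in>{0..T}. dist s t < d \<longrightarrow>
        dist (supnorm \<Omega> (\<lambda>x. u s x - w s x)) (supnorm \<Omega> (\<lambda>x. u t x - w t x)) < e"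
    proof (intro exI[of _ "min d1 d2"] conjI ballI impI)
      fix s assume s: "s \<in> {0..T}" "dist s t < min d1 d2"
      have a: "supnorm \<Omega> (\<lambda>x. u s x - u t x) < e/2" "supnorm \<Omega> (\<lambda>x. w s x - w t x) < e/2"
        using d1(2) d2(2) s by (auto simp: dist_real_def)
      have "\<bar>t - s\<bar> < d1" "\<bar>t - s\<bar> < d2" using s by (auto simp: dist_real_def)
      have b: "supnorm \<Omega> (\<lambda>x. u t x - u s x) < e/2" "supnorm \<Omega> (\<lambda>x. w t x - w s x) < e/2"
        using a by (simp_all add: supnorm_swap[of _ "u t"] supnorm_swap[of _ "w t"])
      show "dist (supnorm \<Omega> (\<lambda>x. u s x - w s x)) (supnorm \<Omega> (\<lambda>x. u t x - w t x)) < e"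
        using supnorm_diff_tri[OF u w ne s(1) t] supnorm_diff_tri[OF u w ne t s(1)] a b
        by (simp add: dist_real_def abs_less_iff)
    qed (use d1 d2 in simp)
  qed
  then show ?thesis by (rule bdd_cont)
qed



lemma strain_diff_bound:
  fixes u w :: "'a::euclidean_space \<Rightarrow> 'a"
  assumes "norm (u y - w y) \<le> B" "norm (u x - w x) \<le> B"
  shows "\<bar>strain u y x - strain w y x\<bar> \<le> 2 * B / norm (y - x)"
proof -
  define e where "e = (y - x) /\<^sub>R norm (y - x)"
  have ne: "norm e \<le> 1" unfolding e_def by (cases "y = x") auto
  have su: "strain v y x = ((v y - v x) \<bullet> e) / norm (y - x)" for v :: "'a \<Rightarrow> 'a"
    by (simp add: strain_def e_def)
  have ab: "(u y - w y) - (u x - w x) = (u y - u x) - (w y - w x)" by (simp add: algebra_simps)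
  have eq: "strain u y x - strain w y x = (((u y - w y) - (u x - w x)) \<bullet> e) / norm (y - x)"
    unfolding su ab by (simp add: inner_diff_left diff_divide_distrib)
  have "\<bar>((u y - w y) - (u x - w x)) \<bullet> e\<bar> \<le> norm ((u y - w y) - (u x - w x)) * norm e"
    by (rule Cauchy_Schwarz_ineq2)
  also have "\<dots> \<le> norm ((u y - w y) - (u x - w x)) * 1"
    using ne by (intro mult_left_mono) auto
  also have "\<dots> \<le> 2 * B" using assms norm_triangle_ineq4[of "u y - w y" "u x - w x"] by simp
  finally have "\<bar>((u y - w y) - (u x - w x)) \<bullet> e\<bar> \<le> 2 * B" .
  then show ?thesis unfolding eq by (simp add: abs_divide divide_right_mono)
qed

theorem mainTheorem2:
  fixes \<Omega> :: "'a::euclidean_space set"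
    and gp :: "real \<Rightarrow> real"
    and mu rL rC rF L \<epsilon> T :: real
  assumes dim: "DIM('a) = 2 \<or> DIM('a) = 3"
    and dom: "open \<Omega>" "connected \<Omega>" "bounded \<Omega>" "\<Omega> \<noteq> {}"
    and eps: "\<epsilon> > 0" and Lpos: "L > 0"
    and env: "failure_envelope gp mu rL rC rF"
    and Tpos: "T > 0"
  shows
    "(\<forall>u. in_CX \<Omega> T u \<longrightarrow>
        (\<forall>t\<in>{0..T}. (\<lambda>p. phase_field gp mu rL L u (fst p) (snd p) t)
                       \<in> borel_measurable (lebesgue_on (\<Omega> \<times> \<Omega>))) \<and>
        (AE p in lebesgue_on (\<Omega> \<times> \<Omega>).
           continuous_on {0..T} (\<lambda>t. phase_field gp mu rL L u (fst p) (snd p) t)))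
     \<and>
     (\<exists>C. \<forall>u w. in_CX \<Omega> T u \<longrightarrow> in_CX \<Omega> T w \<longrightarrow>
        (AE p in lebesgue_on (\<Omega> \<times> \<Omega>). dist (fst p) (snd p) < \<epsilon> \<longrightarrow>
           (\<forall>t\<in>{0..T}.
              \<bar>phase_field gp mu rL L u (fst p) (snd p) t - phase_field gp mu rL L w (fst p) (snd p) t\<bar>
              \<le> CX_norm \<Omega> T (\<lambda>s x. u s x - w s x) * (C / dist (fst p) (snd p)))))"
proof (intro conjI allI impI)
  have hc: "continuous_on UNIV (hfun gp mu rL)" by (rule hfun_cont[OF env])
  have hm: "hfun gp mu rL \<in> borel_measurable borel" by (rule borel_measurable_continuous_onI[OF hc])
  fix u assume u: "in_CX \<Omega> T u"
  have ms: "mem_strain u t y x = (SUP \<tau>\<in>{0..t}. strain (u \<tau>) y x)" for t y x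
    by (simp add: mem_strain_def)
  show "\<forall>t\<in>{0..T}. (\<lambda>p. phase_field gp mu rL L u (fst p) (snd p) t)
                       \<in> borel_measurable (lebesgue_on (\<Omega> \<times> \<Omega>))"
  proof
    fix t assume t: "t \<in> {0..T}"
    define D where "D = {0..t} \<inter> \<rat>"
    have cD: "countable D" unfolding D_def by (simp add: countable_rat)
    have eqp: "phase_field gp mu rL L u (fst p) (snd p) t =
       hfun gp mu rL (sqrt (norm (fst p - snd p) / L) * (SUP \<tau>\<in>D. strain (u \<tau>) (fst p) (snd p)))"
      if p: "p \<in> space (lebesgue_on (\<Omega> \<times> \<Omega>))" for p
    proof -
      have "fst p \<in> \<Omega>" "snd p \<in> \<Omega>" using p by auto
      then have c: "continuous_on {0..t} (\<lambda>s. strain (u s) (fst p) (snd p))"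
        using cont_strain[OF u] t by (meson atLeastAtMost_iff atLeastatMost_subset_iff continuous_on_subset order_refl)
      show ?thesis unfolding phase_hfun rstar_def ms D_def
        using sup_dense[OF c] t by simp
    qed
    have sm: "(\<lambda>p. SUP \<tau>\<in>D. strain (u \<tau>) (fst p) (snd p)) \<in> borel_measurable (lebesgue_on (\<Omega> \<times> \<Omega>))"
    proof (rule borel_measurable_cSUP[OF cD])
      fix \<tau> assume "\<tau> \<in> D"
      then have "in_X \<Omega> (u \<tau>)" using u t unfolding in_CX_def D_def by auto
      then show "(\<lambda>p. strain (u \<tau>) (fst p) (snd p)) \<in> borel_measurable (lebesgue_on (\<Omega> \<times> \<Omega>))"
        unfolding in_X_def by (intro strain_meas) auto
    next
      fix p assume p: "p \<in> space (lebesgue_on (\<Omega> \<times> \<Omega>))"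
      have "fst p \<in> \<Omega>" "snd p \<in> \<Omega>" using p by auto
      then have c: "continuous_on {0..t} (\<lambda>s. strain (u s) (fst p) (snd p))"
        using cont_strain[OF u] t by (meson atLeastAtMost_iff atLeastatMost_subset_iff continuous_on_subset order_refl)
      show "bdd_above ((\<lambda>\<tau>. strain (u \<tau>) (fst p) (snd p)) ` D)"
        by (rule bdd_above_mono[OF bdd_cont[OF c]]) (auto simp: D_def)
    qed
    have "(\<lambda>p. sqrt (norm (fst p - snd p) / L) * (SUP \<tau>\<in>D. strain (u \<tau>) (fst p) (snd p)))
        \<in> borel_measurable (lebesgue_on (\<Omega> \<times> \<Omega>))"
      using sm fst_meas snd_meas by measurable
    from measurable_compose[OF this hm]
    have "(\<lambda>p. hfun gp mu rL (sqrt (norm (fst p - snd p) / L) * (SUP \<tau>\<in>D. strain (u \<tau>) (fst p) (snd p))))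
        \<in> borel_measurable (lebesgue_on (\<Omega> \<times> \<Omega>))" by (simp add: o_def)
    then show "(\<lambda>p. phase_field gp mu rL L u (fst p) (snd p) t) \<in> borel_measurable (lebesgue_on (\<Omega> \<times> \<Omega>))"
      by (rule measurable_cong[THEN iffD1, rotated]) (simp add: eqp)
  qed
  show "AE p in lebesgue_on (\<Omega> \<times> \<Omega>). continuous_on {0..T} (\<lambda>t. phase_field gp mu rL L u (fst p) (snd p) t)"
  proof (rule AE_I2)
    fix p assume p: "p \<in> space (lebesgue_on (\<Omega> \<times> \<Omega>))"
    have "fst p \<in> \<Omega>" "snd p \<in> \<Omega>" using p by auto
    then have c: "continuous_on {0..T} (\<lambda>s. strain (u s) (fst p) (snd p))"
      using cont_strain[OF u] by blast
    have "continuous_on {0..T} (\<lambda>t. sqrt (norm (fst p - snd p) / L) * (SUP \<tau>\<in>{0..t}. strain (u \<tau>) (fst p) (snd p)))"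
      using runmax_cont[OF c] by (intro continuous_intros)
    then have "continuous_on {0..T} (\<lambda>t. hfun gp mu rL (sqrt (norm (fst p - snd p) / L) * (SUP \<tau>\<in>{0..t}. strain (u \<tau>) (fst p) (snd p))))"
      by (rule continuous_on_compose2[OF hc]) auto
    then show "continuous_on {0..T} (\<lambda>t. phase_field gp mu rL L u (fst p) (snd p) t)"
      by (simp add: phase_hfun rstar_def ms)
  qed
next
  obtain Lh where Lh: "Lh \<ge> 0" "\<And>r s. \<bar>hfun gp mu rL r - hfun gp mu rL s\<bar> \<le> Lh * \<bar>r - s\<bar>"
    using hfun_lip[OF env] by blast
  show "\<exists>C. \<forall>u w. in_CX \<Omega> T u \<longrightarrow> in_CX \<Omega> T w \<longrightarrow>
        (AE p in lebesgue_on (\<Omega> \<times> \<Omega>). dist (fst p) (snd p) < \<epsilon> \<longrightarrow>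
           (\<forall>t\<in>{0..T}.
              \<bar>phase_field gp mu rL L u (fst p) (snd p) t - phase_field gp mu rL L w (fst p) (snd p) t\<bar>
              \<le> CX_norm \<Omega> T (\<lambda>s x. u s x - w s x) * (C / dist (fst p) (snd p))))"
  proof (intro exI[of _ "2 * Lh * sqrt (\<epsilon> / L)"] allI impI AE_I2 ballI)
    fix u w p t
    assume u: "in_CX \<Omega> T u" and w: "in_CX \<Omega> T w" and p: "p \<in> space (lebesgue_on (\<Omega> \<times> \<Omega>))"
      and dp: "dist (fst p) (snd p) < \<epsilon>" and t: "t \<in> {0..T}"
    define y where "y = fst p"
    define x where "x = snd p"
    define d where "d = norm (y - x)"
    define N where "N = CX_norm \<Omega> T (\<lambda>s x. u s x - w s x)"
    have yx: "y \<in> \<Omega>" "x \<in> \<Omega>" using p by (auto simp: y_def x_def)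
    have dd: "dist (fst p) (snd p) = d" "d < \<epsilon>" "0 \<le> d" using dp by (auto simp: d_def y_def x_def dist_norm)
    have Nb: "supnorm \<Omega> (\<lambda>x. u \<tau> x - w \<tau> x) \<le> N" if "\<tau> \<in> {0..T}" for \<tau>
      unfolding N_def CX_norm_def using CX_bdd[OF u w dom(4)] that by (intro cSUP_upper) auto
    have pb: "norm (u \<tau> z - w \<tau> z) \<le> N" if "\<tau> \<in> {0..T}" "z \<in> \<Omega>" for \<tau> z
    proof -
      have "in_X \<Omega> (u \<tau>)" "in_X \<Omega> (w \<tau>)" using u w that unfolding in_CX_def by auto
      then have "norm (u \<tau> z - w \<tau> z) \<le> supnorm \<Omega> (\<lambda>x. u \<tau> x - w \<tau> x)"
        using that by (intro supnorm_ge[where f="\<lambda>x. u \<tau> x - w \<tau> x"] inX_bdd_diff) auto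
      then show ?thesis using Nb[OF that(1)] by linarith
    qed
    have N0: "0 \<le> N" using pb[of 0 y] yx Tpos by (smt (verit) atLeastAtMost_iff norm_ge_zero)
    have cu: "continuous_on {0..t} (\<lambda>s. strain (u s) y x)" and cw: "continuous_on {0..t} (\<lambda>s. strain (w s) y x)"
      using cont_strain[OF u yx] cont_strain[OF w yx] t
      by (meson atLeastAtMost_iff atLeastatMost_subset_iff continuous_on_subset order_refl)+
    have "\<bar>mem_strain u t y x - mem_strain w t y x\<bar> \<le> 2 * N / d"
      unfolding mem_strain_def d_def
    proof (rule sup_diff[OF _ bdd_cont[OF cu] bdd_cont[OF cw]])
      show "{0..t} \<noteq> {}" using t by auto
      show "\<forall>\<tau>\<in>{0..t}. \<bar>strain (u \<tau>) y x - strain (w \<tau>) y x\<bar> \<le> 2 * N / norm (y - x)"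
        using pb yx t by (intro ballI strain_diff_bound) auto
    qed
    then have "sqrt (d / L) * \<bar>mem_strain u t y x - mem_strain w t y x\<bar> \<le> sqrt (d / L) * (2 * N / d)"
      by (rule mult_left_mono) (use dd Lpos in simp)
    then have "\<bar>rstar L u t y x - rstar L w t y x\<bar> \<le> sqrt (d / L) * (2 * N / d)"
      unfolding rstar_def d_def[symmetric]
      using dd Lpos by (simp add: right_diff_distrib[symmetric] abs_mult)
    also have "\<dots> \<le> sqrt (\<epsilon> / L) * (2 * N / d)"
      using dd Lpos N0 by (intro mult_right_mono) (auto simp: divide_right_mono)
    finally have r: "\<bar>rstar L u t y x - rstar L w t y x\<bar> \<le> sqrt (\<epsilon> / L) * (2 * N / d)" .
    have "\<bar>phase_field gp mu rL L u y x t - phase_field gp mu rL L w y x t\<bar>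
          \<le> Lh * \<bar>rstar L u t y x - rstar L w t y x\<bar>" unfolding phase_hfun by (rule Lh(2))
    also have "\<dots> \<le> Lh * (sqrt (\<epsilon> / L) * (2 * N / d))" using r Lh(1) by (rule mult_left_mono)
    also have "\<dots> = N * (2 * Lh * sqrt (\<epsilon> / L) / d)" by simp
    finally show "\<bar>phase_field gp mu rL L u (fst p) (snd p) t - phase_field gp mu rL L w (fst p) (snd p) t\<bar>
              \<le> CX_norm \<Omega> T (\<lambda>s x. u s x - w s x) * (2 * Lh * sqrt (\<epsilon> / L) / dist (fst p) (snd p))"
      by (simp add: y_def x_def N_def dd(1))
  qed
qed


end
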